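(* Let $f_1,f_2:(0,1)\to(0,1)$ each be of the form $f_m(p)=1-\sum_{k=1}^\infty c_{m,k}(1-p)^k$ with $c_{m,k}\ge0$ and $\sum_k c_{m,k}=1$ ($m=1,2$). Define $f(p)=f_2(f_1(p))$, $g(p)=1-(1-f_1(p))(1-f_2(p))$, and $h(p)=\alpha f_1(p)+(1-\alpha)f_2(p)$ for a fixed $\alpha\in(0,1)$. Then: (a) each of $f,g,h$ can also be written as $1-\sum_{k=1}^\infty c_k(1-p)^k$ with $c_k\ge0$ and $\sum_k c_k=1$; (b) if $\lim_{p\to0}f_m(p)/p=\infty$ for $m=1,2$, then $\lim_{p\to0}F(p)/p=\infty$ for each $F\in\{f,g,h\}$; (c) if $f_m'(p)=\Omega(f_m(p)/p)$ as $p\to0$ for $m=1,2$, then $F'(p)=\Omega(F(p)/p)$ as $p\to0$ for each $F\in\{f,g,h\}$.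
   Context: For positive $f_1,f_2$, $f_1(x)=\Omega(f_2(x))$ as $x\to x_0$ means there are $C,\delta>0$ with $f_1(x)\ge Cf_2(x)$ for all $x$ in the domain with $|x-x_0|<\delta$. *)

theory Defs
  imports "HOL-Analysis.Analysis"
begin

text \<open>F has the form F(p) = 1 - sum_{k>=1} c_k (1-p)^k on (0,1), with c_k >= 0 and sum_k c_k = 1.
  The coefficient sequence is indexed from 0 with c 0 = 0.\<close>
definition series_form :: "(real \<Rightarrow> real) \<Rightarrow> (nat \<Rightarrow> real) \<Rightarrow> bool" where
  "series_form F c \<longleftrightarrow> (\<forall>k. 0 \<le> c k) \<and> c 0 = 0 \<and> c sums 1 \<and>
     (\<forall>p\<in>{0<..<1}. F p = 1 - (\<Sum>k. c k * (1 - p) ^ k))"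

definition bigOmega_at0 :: "(real \<Rightarrow> real) \<Rightarrow> (real \<Rightarrow> real) \<Rightarrow> bool" where
  "bigOmega_at0 F1 F2 \<longleftrightarrow> (\<exists>C>0. \<exists>\<delta>>0. \<forall>p. 0 < p \<and> p < 1 \<and> p < \<delta> \<longrightarrow> F1 p \<ge> C * F2 p)"

end

theory Submission
  imports Defs
begin

definition G :: "(nat \<Rightarrow> real) \<Rightarrow> real \<Rightarrow> real" where
  "G c q = (\<Sum>k. c k * q ^ k)"

lemma sf_nonneg: "series_form F c \<Longrightarrow> 0 \<le> c k"
  by (simp add: series_form_def)

lemma sf_summable:
  assumes "series_form F c" "0 \<le> q" "q \<le> 1"
  shows "(\<lambda>k. c k * q^k) sums G c q"
proof -
  have c: "\<And>k. 0 \<le> c k" "summable c" using assms(1) by (auto simp: series_form_def sums_iff)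
  have "summable (\<lambda>k. c k * q^k)"
  proof (rule summable_comparison_test'[OF c(2)])
    fix n show "norm (c n * q ^ n) \<le> c n"
      using c(1)[of n] assms by (simp add: abs_mult mult_left_le power_le_one)
  qed
  thus ?thesis by (simp add: G_def summable_sums)
qed

lemma sf_G1: "series_form F c \<Longrightarrow> G c 1 = 1"
  by (simp add: series_form_def G_def sums_iff)

lemma sf_F: "series_form F c \<Longrightarrow> p \<in> {0<..<1} \<Longrightarrow> F p = 1 - G c (1 - p)"
  by (simp add: series_form_def G_def)

lemma G_bounds:
  assumes "series_form F c" "0 \<le> q" "q \<le> 1"
  shows "0 \<le> G c q" "G c q \<le> 1"
proof -
  have s: "(\<lambda>k. c k * q^k) sums G c q" by (rule sf_summable[OF assms])
  have c: "\<And>k. 0 \<le> c k" "c sums 1" using assms(1) by (auto simp: series_form_def)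
  show "0 \<le> G c q" by (rule sums_le[OF _ sums_zero s]) (use c(1) assms in simp)
  show "G c q \<le> 1"
    by (rule sums_le[OF _ s c(2)]) (use c(1) assms in \<open>simp add: mult_left_le power_le_one\<close>)
qed

lemma G_cont:
  assumes "series_form F c"
  shows "continuous_on {0..1} (G c)"
proof -
  have c: "\<And>k. 0 \<le> c k" "summable c" using assms(1) by (auto simp: series_form_def sums_iff)
  have ul: "uniform_limit {0..1} (\<lambda>n x. \<Sum>i<n. c i * x ^ i) (\<lambda>x. \<Sum>i. c i * x ^ i) sequentially"
    by (rule Weierstrass_m_test[OF _ c(2)]) (use c(1) in \<open>auto simp: abs_mult mult_left_le power_le_one\<close>)
  have "continuous_on {0..1} (\<lambda>x. \<Sum>i. c i * x ^ i)"
    by (rule uniform_limit_theorem[OF _ ul]) (auto intro!: always_eventually continuous_intros)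
  thus ?thesis by (simp add: G_def[abs_def])
qed

lemma F_tendsto0:
  assumes "series_form F c"
  shows "(F \<longlongrightarrow> 0) (at_right 0)"
proof -
  have c1: "continuous_on {0..1} (\<lambda>p. G c (1 - p))"
    by (rule continuous_on_compose2[OF G_cont[OF assms] continuous_on_diff[OF continuous_on_const continuous_on_id]]) auto
  have cont: "continuous_on {0..1} (\<lambda>p. 1 - G c (1 - p))"
    by (rule continuous_on_diff[OF continuous_on_const c1])
  have "((\<lambda>p. 1 - G c (1 - p)) \<longlongrightarrow> 1 - G c (1 - 0)) (at 0 within {0..1})"
    using cont unfolding continuous_on_def by (rule bspec) simp
  hence lim: "((\<lambda>p. 1 - G c (1 - p)) \<longlongrightarrow> 0) (at_right 0)"
    by (simp add: at_within_Icc_at_right sf_G1[OF assms])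
  have ev: "eventually (\<lambda>p. F p = 1 - G c (1 - p)) (at_right 0)"
    unfolding eventually_at_right_field
    by (rule exI[of _ 1]) (auto simp: sf_F[OF assms])
  show ?thesis using tendsto_cong[OF ev] lim by simp
qed

lemma F_diff:
  assumes "series_form F c" "p \<in> {0<..<1}"
  shows "F differentiable (at p)"
proof -
  have c: "\<And>k. 0 \<le> c k" "c sums 1" using assms(1) by (auto simp: series_form_def)
  have "summable (\<lambda>n. c n * 1 ^ n)" using c(2) by (simp add: sums_iff)
  hence "conv_radius c \<ge> ereal (norm (1::real))" by (rule conv_radius_geI)
  moreover have "ereal (norm (1 - p)) < ereal (norm (1::real))" using assms(2) by auto
  ultimately have "ereal (norm (1 - p)) < conv_radius c" by (meson less_le_trans)
  from has_field_derivative_powser[OF this, of UNIV]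
  obtain D where D: "(G c has_field_derivative D) (at (1 - p))"
    unfolding G_def[abs_def] by blast
  have D2: "((\<lambda>x. 1 - x) has_field_derivative (0 - 1)) (at p)"
    by (intro DERIV_diff DERIV_const DERIV_ident)
  have D3: "((\<lambda>x. G c (1 - x)) has_field_derivative D * (0 - 1)) (at p)"
    by (rule DERIV_chain2[where f="G c" and g="\<lambda>x. 1 - x"]) (use D D2 in simp_all)
  have "((\<lambda>x. 1 - G c (1 - x)) has_field_derivative (0 - D * (0 - 1))) (at p)"
    by (intro DERIV_diff D3 DERIV_const)
  hence "(F has_field_derivative (0 - D * (0 - 1))) (at p)"
    by (rule has_field_derivative_transform_within_open[of _ _ _ "{0<..<1}"])
       (use assms in \<open>auto simp: sf_F[OF assms(1)]\<close>)
  thus ?thesis unfolding differentiable_def has_field_derivative_def by blast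
qed

lemma cauchy_sums:
  fixes a b :: "nat \<Rightarrow> real"
  assumes a0: "\<And>k. 0 \<le> a k" and b0: "\<And>k. 0 \<le> b k" and q: "0 \<le> q"
    and sa: "(\<lambda>k. a k * q^k) sums A" and sb: "(\<lambda>k. b k * q^k) sums B"
  shows "(\<lambda>k. (\<Sum>i\<le>k. a i * b (k-i)) * q^k) sums (A*B)"
proof -
  have na: "summable (\<lambda>k. norm (a k * q^k))" using sa a0 q by (simp add: sums_iff abs_mult)
  have nb: "summable (\<lambda>k. norm (b k * q^k))" using sb b0 q by (simp add: sums_iff abs_mult)
  have "(\<lambda>k. \<Sum>i\<le>k. (a i * q^i) * (b (k-i) * q^(k-i))) sums ((\<Sum>k. a k * q^k) * (\<Sum>k. b k * q^k))"
    by (rule Cauchy_product_sums[OF na nb])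
  also have "(\<Sum>k. a k * q^k) * (\<Sum>k. b k * q^k) = A * B" using sa sb by (simp add: sums_iff)
  also have "(\<lambda>k. \<Sum>i\<le>k. (a i * q^i) * (b (k-i) * q^(k-i))) = (\<lambda>k. (\<Sum>i\<le>k. a i * b (k-i)) * q^k)"
  proof
    fix k
    have "(\<Sum>i\<le>k. (a i * q^i) * (b (k-i) * q^(k-i))) = (\<Sum>i\<le>k. a i * b (k-i) * q^k)"
    proof (rule sum.cong)
      fix i assume "i \<in> {..k}"
      hence "q^i * q^(k-i) = q^k" by (simp flip: power_add)
      thus "(a i * q^i) * (b (k-i) * q^(k-i)) = a i * b (k-i) * q^k"
        by (metis mult.assoc mult.left_commute)
    qed simp
    thus "(\<Sum>i\<le>k. (a i * q^i) * (b (k-i) * q^(k-i))) = (\<Sum>i\<le>k. a i * b (k-i)) * q^k"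
      by (simp add: sum_distrib_right)
  qed
  finally show ?thesis .
qed

fun dpow :: "(nat \<Rightarrow> real) \<Rightarrow> nat \<Rightarrow> nat \<Rightarrow> real" where
  "dpow a 0 k = (if k = 0 then 1 else 0)"
| "dpow a (Suc j) k = (\<Sum>i\<le>k. a i * dpow a j (k - i))"

lemma dpow_nonneg: "(\<And>k. 0 \<le> a k) \<Longrightarrow> 0 \<le> dpow a j k"
  by (induction j arbitrary: k) (auto intro!: sum_nonneg)

lemma dpow_sums:
  assumes "\<And>k. 0 \<le> a k" "0 \<le> q" "(\<lambda>k. a k * q^k) sums A"
  shows "(\<lambda>k. dpow a j k * q^k) sums (A^j)"
proof (induction j)
  case 0
  have "(\<lambda>k. dpow a 0 k * q^k) = (\<lambda>k. if k = 0 then (\<lambda>_. 1) k else 0)" by auto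
  then show ?case using sums_single[of 0 "\<lambda>_. 1::real"] by simp
next
  case (Suc j)
  from cauchy_sums[OF assms(1) dpow_nonneg[OF assms(1)] assms(2) assms(3) Suc]
  show ?case by simp
qed

lemma comp_has_sum:
  assumes s1: "series_form f1 c1" and s2: "series_form f2 c2" and q: "0 \<le> q" "q \<le> 1"
  shows "((\<lambda>(k,j). c2 j * (dpow c1 j k * q^k)) has_sum G c2 (G c1 q)) (UNIV \<times> UNIV)"
proof -
  define F where "F = (\<lambda>(j,k). c2 j * (dpow c1 j k * q^k))"
  have c1: "\<And>k. 0 \<le> c1 k" and c2: "\<And>k. 0 \<le> c2 k" using s1 s2 by (auto simp: series_form_def)
  have A: "0 \<le> G c1 q" "G c1 q \<le> 1" using G_bounds[OF s1 q] by auto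
  have row: "((\<lambda>k. F (j,k)) has_sum (c2 j * G c1 q ^ j)) UNIV" for j
    unfolding F_def
    by (auto intro!: sums_nonneg_imp_has_sum sums_mult dpow_sums[OF c1 q(1) sf_summable[OF s1 q]]
        mult_nonneg_nonneg c2 dpow_nonneg c1 zero_le_power q(1))
  have col: "((\<lambda>j. c2 j * G c1 q ^ j) has_sum G c2 (G c1 q)) UNIV"
    by (rule sums_nonneg_imp_has_sum[OF sf_summable[OF s2 A]]) (simp add: c2 A)
  have summ: "F summable_on Sigma UNIV (\<lambda>_. UNIV)"
    by (rule summable_on_SigmaI[OF row]) (use col in \<open>auto simp: F_def intro!: has_sum_imp_summable mult_nonneg_nonneg c2 dpow_nonneg c1 zero_le_power q(1)\<close>)
  have "(F has_sum G c2 (G c1 q)) (UNIV \<times> UNIV)"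
    by (rule has_sum_SigmaI[OF row col summ])
  hence "((\<lambda>(x,y). F (y,x)) has_sum G c2 (G c1 q)) (UNIV \<times> UNIV)"
    using has_sum_swap[where f=F and A=UNIV and B=UNIV] by simp
  thus ?thesis by (simp add: F_def case_prod_unfold)
qed

definition ecomp :: "(nat \<Rightarrow> real) \<Rightarrow> (nat \<Rightarrow> real) \<Rightarrow> nat \<Rightarrow> real" where
  "ecomp c1 c2 k = infsum (\<lambda>j. c2 j * dpow c1 j k) UNIV"

lemma ecomp_sums:
  assumes s1: "series_form f1 c1" and s2: "series_form f2 c2" and q: "0 \<le> q" "q \<le> 1"
  shows "(\<lambda>k. ecomp c1 c2 k * q^k) sums G c2 (G c1 q)"
proof -
  have H1: "((\<lambda>(k,j). c2 j * (dpow c1 j k * 1^k)) has_sum G c2 (G c1 1)) (UNIV \<times> UNIV)"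
    by (rule comp_has_sum[OF s1 s2]) auto
  have sk: "(\<lambda>j. c2 j * dpow c1 j k) summable_on UNIV" for k
    using summable_on_SigmaD1[where f="\<lambda>k j. c2 j * (dpow c1 j k * 1^k)", OF has_sum_imp_summable[OF H1], of k]
    by simp
  have H: "((\<lambda>(k,j). c2 j * (dpow c1 j k * q^k)) has_sum G c2 (G c1 q)) (UNIV \<times> UNIV)"
    by (rule comp_has_sum[OF s1 s2 q])
  have "((\<lambda>k. ecomp c1 c2 k * q^k) has_sum G c2 (G c1 q)) UNIV"
  proof (rule has_sum_Sigma'[OF H])
    fix k :: nat
    have "((\<lambda>j. c2 j * dpow c1 j k * q^k) has_sum ecomp c1 c2 k * q^k) UNIV"
      unfolding ecomp_def by (rule has_sum_cmult_left) (rule has_sum_infsum[OF sk])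
    thus "((\<lambda>y. (\<lambda>(k,j). c2 j * (dpow c1 j k * q^k)) (k, y)) has_sum ecomp c1 c2 k * q^k) UNIV"
      by (simp add: mult.assoc)
  qed
  thus ?thesis by (rule has_sum_imp_sums)
qed

lemma ecomp_nonneg:
  assumes s1: "series_form f1 c1" and s2: "series_form f2 c2"
  shows "0 \<le> ecomp c1 c2 k"
  unfolding ecomp_def using s1 s2
  by (intro infsum_nonneg mult_nonneg_nonneg dpow_nonneg) (auto simp: series_form_def)

lemma ecomp_0:
  assumes s1: "series_form f1 c1" and s2: "series_form f2 c2"
  shows "ecomp c1 c2 0 = 0"
proof -
  have z: "\<And>j. c2 j * dpow c1 j 0 = 0"
  proof -
    fix j show "c2 j * dpow c1 j 0 = 0"
      using s1 s2 by (cases j) (auto simp: series_form_def)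
  qed
  show ?thesis unfolding ecomp_def using z by (intro infsum_0) blast
qed


lemma sf_intro:
  assumes "\<And>k. 0 \<le> e k" "e 0 = 0"
    and "\<And>q. 0 \<le> q \<Longrightarrow> q \<le> 1 \<Longrightarrow> (\<lambda>k. e k * q^k) sums S q" "S 1 = 1"
    and "\<And>p. p \<in> {0<..<1} \<Longrightarrow> F p = 1 - S (1 - p)"
  shows "series_form F e"
  unfolding series_form_def
proof (intro conjI allI ballI)
  show "e sums 1" using assms(3)[of 1] assms(4) by simp
  fix p :: real assume p: "p \<in> {0<..<1}"
  have "(\<lambda>k. e k * (1 - p)^k) sums S (1 - p)" using p by (intro assms(3)) auto
  thus "F p = 1 - (\<Sum>k. e k * (1 - p) ^ k)" using assms(5)[OF p] by (simp add: sums_iff)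
qed (use assms in auto)

lemma bigO_iff:
  "bigOmega_at0 A B \<longleftrightarrow> (\<exists>C>0. eventually (\<lambda>p. C * B p \<le> A p) (at_right (0::real)))"
proof
  assume "bigOmega_at0 A B"
  then obtain C d where C: "C > 0" "d > 0" "\<forall>p. 0 < p \<and> p < 1 \<and> p < d \<longrightarrow> A p \<ge> C * B p"
    unfolding bigOmega_at0_def by blast
  have "eventually (\<lambda>p. C * B p \<le> A p) (at_right (0::real))"
    unfolding eventually_at_right_field
    by (rule exI[of _ "min d 1"]) (use C in auto)
  thus "\<exists>C>0. eventually (\<lambda>p. C * B p \<le> A p) (at_right (0::real))" using C by blast
next
  assume "\<exists>C>0. eventually (\<lambda>p. C * B p \<le> A p) (at_right (0::real))"
  then obtain C b where "C > 0" "b > 0" "\<forall>y>0. y < b \<longrightarrow> C * B y \<le> A y"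
    unfolding eventually_at_right_field by auto
  thus "bigOmega_at0 A B" unfolding bigOmega_at0_def by (intro exI[of _ C] conjI exI[of _ b]) auto
qed

lemma sf_DERIV:
  assumes "series_form F c" "p \<in> {0<..<1}"
  shows "(F has_field_derivative deriv F p) (at p)"
  using F_diff[OF assms] DERIV_deriv_iff_real_differentiable by blast

lemma ev01: "eventually (\<lambda>p::real. 0 < p \<and> p < 1) (at_right 0)"
  unfolding eventually_at_right_field by (rule exI[of _ 1]) auto

lemma filterlim_f_at_right:
  assumes s: "series_form f c" and r: "\<forall>p\<in>{0<..<1}. f p \<in> {0<..<1}"
  shows "filterlim f (at_right 0) (at_right 0)"
  unfolding filterlim_at
proof
  show "eventually (\<lambda>p. f p \<in> {0<..} \<and> f p \<noteq> 0) (at_right 0)"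
    using ev01
  proof eventually_elim
    fix p :: real assume "0 < p \<and> p < 1"
    hence "f p \<in> {0<..<1}" using r by auto
    thus "f p \<in> {0<..} \<and> f p \<noteq> 0" by auto
  qed
  show "(f \<longlongrightarrow> 0) (at_right 0)" by (rule F_tendsto0[OF s])
qed


lemma case_comp:
  fixes f1 f2 :: "real \<Rightarrow> real"
  assumes r1: "\<forall>p\<in>{0<..<1}. f1 p \<in> {0<..<1}" and r2: "\<forall>p\<in>{0<..<1}. f2 p \<in> {0<..<1}"
    and s1: "series_form f1 c1" and s2: "series_form f2 c2"
  shows "(\<exists>c. series_form (\<lambda>p. f2 (f1 p)) c)
         \<and> ((filterlim (\<lambda>p. f1 p / p) at_top (at_right 0) \<and> filterlim (\<lambda>p. f2 p / p) at_top (at_right 0))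
              \<longrightarrow> filterlim (\<lambda>p. f2 (f1 p) / p) at_top (at_right 0))
         \<and> ((bigOmega_at0 (deriv f1) (\<lambda>p. f1 p / p) \<and> bigOmega_at0 (deriv f2) (\<lambda>p. f2 p / p))
              \<longrightarrow> bigOmega_at0 (deriv (\<lambda>p. f2 (f1 p))) (\<lambda>p. f2 (f1 p) / p))"
proof (intro conjI impI)
  have "series_form (\<lambda>p. f2 (f1 p)) (ecomp c1 c2)"
  proof (rule sf_intro[where S="\<lambda>q. G c2 (G c1 q)"])
    show "\<And>k. 0 \<le> ecomp c1 c2 k" by (rule ecomp_nonneg[OF s1 s2])
    show "ecomp c1 c2 0 = 0" by (rule ecomp_0[OF s1 s2])
    show "\<And>q. 0 \<le> q \<Longrightarrow> q \<le> 1 \<Longrightarrow> (\<lambda>k. ecomp c1 c2 k * q ^ k) sums G c2 (G c1 q)"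
      by (rule ecomp_sums[OF s1 s2])
    show "G c2 (G c1 1) = 1" by (simp add: sf_G1[OF s1] sf_G1[OF s2])
    fix p :: real assume p: "p \<in> {0<..<1}"
    have "f1 p \<in> {0<..<1}" using r1 p by auto
    hence "f2 (f1 p) = 1 - G c2 (1 - f1 p)" by (rule sf_F[OF s2])
    also have "1 - f1 p = G c1 (1 - p)" using sf_F[OF s1 p] by simp
    finally show "f2 (f1 p) = 1 - G c2 (G c1 (1 - p))" .
  qed
  thus "\<exists>c. series_form (\<lambda>p. f2 (f1 p)) c" by blast
next
  have lim1: "filterlim f1 (at_right 0) (at_right 0)" by (rule filterlim_f_at_right[OF s1 r1])
  assume H: "filterlim (\<lambda>p. f1 p / p) at_top (at_right 0) \<and> filterlim (\<lambda>p. f2 p / p) at_top (at_right 0)"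
  have a: "filterlim (\<lambda>p. f2 (f1 p) / f1 p) at_top (at_right 0)"
    using filterlim_compose[OF conjunct2[OF H] lim1] by simp
  have "filterlim (\<lambda>p. f2 (f1 p) / f1 p * (f1 p / p)) at_top (at_right 0)"
    by (rule filterlim_at_top_mult_at_top[OF a conjunct1[OF H]])
  moreover have "eventually (\<lambda>p. f2 (f1 p) / f1 p * (f1 p / p) \<le> f2 (f1 p) / p) (at_right 0)"
    using ev01
  proof eventually_elim
    fix p :: real assume "0 < p \<and> p < 1"
    hence "f1 p \<in> {0<..<1}" using r1 by auto
    thus "f2 (f1 p) / f1 p * (f1 p / p) \<le> f2 (f1 p) / p" by simp
  qed
  ultimately show "filterlim (\<lambda>p. f2 (f1 p) / p) at_top (at_right 0)"
    by (rule filterlim_at_top_mono)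
next
  have lim1: "filterlim f1 (at_right 0) (at_right 0)" by (rule filterlim_f_at_right[OF s1 r1])
  assume H: "bigOmega_at0 (deriv f1) (\<lambda>p. f1 p / p) \<and> bigOmega_at0 (deriv f2) (\<lambda>p. f2 p / p)"
  obtain C1 where C1: "C1 > 0" and e1: "eventually (\<lambda>p. C1 * (f1 p / p) \<le> deriv f1 p) (at_right 0)"
    using H unfolding bigO_iff by blast
  obtain C2 where C2: "C2 > 0" and e2: "eventually (\<lambda>p. C2 * (f2 p / p) \<le> deriv f2 p) (at_right 0)"
    using H unfolding bigO_iff by blast
  have e2': "eventually (\<lambda>p. C2 * (f2 (f1 p) / f1 p) \<le> deriv f2 (f1 p)) (at_right 0)"
    by (rule eventually_compose_filterlim[OF e2 lim1])
  have "eventually (\<lambda>p. (C1 * C2) * (f2 (f1 p) / p) \<le> deriv (\<lambda>p. f2 (f1 p)) p) (at_right 0)"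
    using ev01 e1 e2'
  proof eventually_elim
    fix p :: real assume p: "0 < p \<and> p < 1" and i1: "C1 * (f1 p / p) \<le> deriv f1 p"
      and i2: "C2 * (f2 (f1 p) / f1 p) \<le> deriv f2 (f1 p)"
    hence a: "f1 p \<in> {0<..<1}" using r1 by auto
    hence b: "f2 (f1 p) \<in> {0<..<1}" using r2 by auto
    have d1: "(f1 has_field_derivative deriv f1 p) (at p)" using p by (intro sf_DERIV[OF s1]) auto
    have d2: "(f2 has_field_derivative deriv f2 (f1 p)) (at (f1 p))" using a by (intro sf_DERIV[OF s2])
    have "((\<lambda>p. f2 (f1 p)) has_field_derivative deriv f2 (f1 p) * deriv f1 p) (at p)"
      by (rule DERIV_chain2[OF d2 d1])
    hence dd: "deriv (\<lambda>p. f2 (f1 p)) p = deriv f2 (f1 p) * deriv f1 p" by (rule DERIV_imp_deriv)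
    have n1: "0 \<le> C2 * (f2 (f1 p) / f1 p)" using a b C2 by auto
    have n2: "0 \<le> C1 * (f1 p / p)" using a p C1 by auto
    have m1: "C2 * (f2 (f1 p) / f1 p) * (C1 * (f1 p / p)) \<le> deriv f2 (f1 p) * deriv f1 p"
      by (rule mult_mono[OF i2 i1 _ n2]) (use n1 i2 in linarith)
    have m2: "C2 * (f2 (f1 p) / f1 p) * (C1 * (f1 p / p)) = (C1 * C2) * (f2 (f1 p) / p)"
      using a by (simp add: field_simps)
    show "(C1 * C2) * (f2 (f1 p) / p) \<le> deriv (\<lambda>p. f2 (f1 p)) p"
      unfolding dd using m1 m2 by linarith
  qed
  thus "bigOmega_at0 (deriv (\<lambda>p. f2 (f1 p))) (\<lambda>p. f2 (f1 p) / p)"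
    unfolding bigO_iff using C1 C2 by (intro exI[of _ "C1 * C2"]) auto
qed


lemma case_prod:
  fixes f1 f2 :: "real \<Rightarrow> real"
  assumes r1: "\<forall>p\<in>{0<..<1}. f1 p \<in> {0<..<1}" and r2: "\<forall>p\<in>{0<..<1}. f2 p \<in> {0<..<1}"
    and s1: "series_form f1 c1" and s2: "series_form f2 c2"
  shows "(\<exists>c. series_form (\<lambda>p. 1 - (1 - f1 p) * (1 - f2 p)) c)
         \<and> ((filterlim (\<lambda>p. f1 p / p) at_top (at_right 0) \<and> filterlim (\<lambda>p. f2 p / p) at_top (at_right 0))
              \<longrightarrow> filterlim (\<lambda>p. (1 - (1 - f1 p) * (1 - f2 p)) / p) at_top (at_right 0))
         \<and> ((bigOmega_at0 (deriv f1) (\<lambda>p. f1 p / p) \<and> bigOmega_at0 (deriv f2) (\<lambda>p. f2 p / p))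
              \<longrightarrow> bigOmega_at0 (deriv (\<lambda>p. 1 - (1 - f1 p) * (1 - f2 p))) (\<lambda>p. (1 - (1 - f1 p) * (1 - f2 p)) / p))"
proof (intro conjI impI)
  have c1: "\<And>k. 0 \<le> c1 k" and c2: "\<And>k. 0 \<le> c2 k" using s1 s2 by (auto simp: series_form_def)
  have c10: "c1 0 = 0" using s1 by (auto simp: series_form_def)
  have "series_form (\<lambda>p. 1 - (1 - f1 p) * (1 - f2 p)) (\<lambda>k. \<Sum>i\<le>k. c1 i * c2 (k-i))"
  proof (rule sf_intro[where S="\<lambda>q. G c1 q * G c2 q"])
    show "\<And>k. 0 \<le> (\<Sum>i\<le>k. c1 i * c2 (k-i))" by (intro sum_nonneg mult_nonneg_nonneg c1 c2)
    show "(\<Sum>i\<le>0. c1 i * c2 (0-i)) = 0" by (simp add: c10)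
    show "\<And>q. 0 \<le> q \<Longrightarrow> q \<le> 1 \<Longrightarrow> (\<lambda>k. (\<Sum>i\<le>k. c1 i * c2 (k-i)) * q ^ k) sums (G c1 q * G c2 q)"
      by (rule cauchy_sums[OF c1 c2]) (auto intro: sf_summable[OF s1] sf_summable[OF s2])
    show "G c1 1 * G c2 1 = 1" by (simp add: sf_G1[OF s1] sf_G1[OF s2])
    fix p :: real assume p: "p \<in> {0<..<1}"
    show "1 - (1 - f1 p) * (1 - f2 p) = 1 - G c1 (1 - p) * G c2 (1 - p)"
      using sf_F[OF s1 p] sf_F[OF s2 p] by simp
  qed
  thus "\<exists>c. series_form (\<lambda>p. 1 - (1 - f1 p) * (1 - f2 p)) c" by blast
next
  assume H: "filterlim (\<lambda>p. f1 p / p) at_top (at_right 0) \<and> filterlim (\<lambda>p. f2 p / p) at_top (at_right 0)"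
  have "eventually (\<lambda>p. f1 p / p \<le> (1 - (1 - f1 p) * (1 - f2 p)) / p) (at_right 0)"
    using ev01
  proof eventually_elim
    fix p :: real assume p: "0 < p \<and> p < 1"
    hence "f1 p \<in> {0<..<1}" "f2 p \<in> {0<..<1}" using r1 r2 by auto
    hence "f1 p \<le> 1 - (1 - f1 p) * (1 - f2 p)" by (simp add: algebra_simps)
    thus "f1 p / p \<le> (1 - (1 - f1 p) * (1 - f2 p)) / p" using p by (simp add: divide_right_mono)
  qed
  thus "filterlim (\<lambda>p. (1 - (1 - f1 p) * (1 - f2 p)) / p) at_top (at_right 0)"
    by (rule filterlim_at_top_mono[OF conjunct1[OF H]])
next
  assume H: "bigOmega_at0 (deriv f1) (\<lambda>p. f1 p / p) \<and> bigOmega_at0 (deriv f2) (\<lambda>p. f2 p / p)"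
  obtain C1 where C1: "C1 > 0" and e1: "eventually (\<lambda>p. C1 * (f1 p / p) \<le> deriv f1 p) (at_right 0)"
    using H unfolding bigO_iff by blast
  obtain C2 where C2: "C2 > 0" and e2: "eventually (\<lambda>p. C2 * (f2 p / p) \<le> deriv f2 p) (at_right 0)"
    using H unfolding bigO_iff by blast
  have t1: "eventually (\<lambda>p. f1 p < 1/2) (at_right 0)"
    by (rule order_tendstoD(2)[OF F_tendsto0[OF s1]]) simp
  have t2: "eventually (\<lambda>p. f2 p < 1/2) (at_right 0)"
    by (rule order_tendstoD(2)[OF F_tendsto0[OF s2]]) simp
  define C where "C = min C1 C2 / 2"
  have CC: "C > 0" "C \<le> C1 / 2" "C \<le> C2 / 2" using C1 C2 by (auto simp: C_def)
  have "eventually (\<lambda>p. C * ((1 - (1 - f1 p) * (1 - f2 p)) / p) \<le> deriv (\<lambda>p. 1 - (1 - f1 p) * (1 - f2 p)) p) (at_right 0)"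
    using ev01 e1 e2 t1 t2
  proof eventually_elim
    fix p :: real assume p: "0 < p \<and> p < 1" and i1: "C1 * (f1 p / p) \<le> deriv f1 p"
      and i2: "C2 * (f2 p / p) \<le> deriv f2 p" and h1: "f1 p < 1/2" and h2: "f2 p < 1/2"
    have a: "f1 p \<in> {0<..<1}" "f2 p \<in> {0<..<1}" using r1 r2 p by auto
    have d1: "(f1 has_field_derivative deriv f1 p) (at p)" using p by (intro sf_DERIV[OF s1]) auto
    have d2: "(f2 has_field_derivative deriv f2 p) (at p)" using p by (intro sf_DERIV[OF s2]) auto
    have "((\<lambda>p. 1 - (1 - f1 p) * (1 - f2 p)) has_field_derivative
           0 - ((0 - deriv f1 p) * (1 - f2 p) + (0 - deriv f2 p) * (1 - f1 p))) (at p)"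
      by (rule DERIV_diff[OF DERIV_const DERIV_mult[OF DERIV_diff[OF DERIV_const d1] DERIV_diff[OF DERIV_const d2]]])
    hence dd: "deriv (\<lambda>p. 1 - (1 - f1 p) * (1 - f2 p)) p = deriv f1 p * (1 - f2 p) + deriv f2 p * (1 - f1 p)"
      by (simp add: DERIV_imp_deriv algebra_simps)
    define x where "x = f1 p / p"
    define y where "y = f2 p / p"
    have x0: "x \<ge> 0" "y \<ge> 0" using a p by (auto simp: x_def y_def)
    have u0: "0 \<le> deriv f1 p" using i1 x0 C1 unfolding x_def by (smt (verit) mult_nonneg_nonneg)
    have v0: "0 \<le> deriv f2 p" using i2 x0 C2 unfolding y_def by (smt (verit) mult_nonneg_nonneg)
    have m1: "C1 * x * (1/2) \<le> deriv f1 p * (1 - f2 p)"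
      by (rule mult_mono) (use i1 h2 u0 in \<open>auto simp: x_def\<close>)
    have m2: "C2 * y * (1/2) \<le> deriv f2 p * (1 - f1 p)"
      by (rule mult_mono) (use i2 h1 v0 in \<open>auto simp: y_def\<close>)
    have "C * x \<le> (C1/2) * x" by (rule mult_right_mono[OF CC(2) x0(1)])
    hence m3: "C * x \<le> C1 * x * (1/2)" by simp
    have "C * y \<le> (C2/2) * y" by (rule mult_right_mono[OF CC(3) x0(2)])
    hence m4: "C * y \<le> C2 * y * (1/2)" by simp
    have "1 - (1 - f1 p) * (1 - f2 p) \<le> f1 p + f2 p" using a by (simp add: algebra_simps)
    hence "(1 - (1 - f1 p) * (1 - f2 p)) / p \<le> x + y"
      using p by (simp add: x_def y_def divide_right_mono add_divide_distrib[symmetric])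
    hence m5: "C * ((1 - (1 - f1 p) * (1 - f2 p)) / p) \<le> C * x + C * y"
      using CC by (metis distrib_left mult_left_mono less_imp_le)
    show "C * ((1 - (1 - f1 p) * (1 - f2 p)) / p) \<le> deriv (\<lambda>p. 1 - (1 - f1 p) * (1 - f2 p)) p"
      unfolding dd using m1 m2 m3 m4 m5 by linarith
  qed
  thus "bigOmega_at0 (deriv (\<lambda>p. 1 - (1 - f1 p) * (1 - f2 p))) (\<lambda>p. (1 - (1 - f1 p) * (1 - f2 p)) / p)"
    unfolding bigO_iff using CC by blast
qed

lemma case_mix:
  fixes f1 f2 :: "real \<Rightarrow> real"
  assumes r1: "\<forall>p\<in>{0<..<1}. f1 p \<in> {0<..<1}" and r2: "\<forall>p\<in>{0<..<1}. f2 p \<in> {0<..<1}"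
    and s1: "series_form f1 c1" and s2: "series_form f2 c2" and al: "0 < \<alpha>" "\<alpha> < 1"
  shows "(\<exists>c. series_form (\<lambda>p. \<alpha> * f1 p + (1 - \<alpha>) * f2 p) c)
         \<and> ((filterlim (\<lambda>p. f1 p / p) at_top (at_right 0) \<and> filterlim (\<lambda>p. f2 p / p) at_top (at_right 0))
              \<longrightarrow> filterlim (\<lambda>p. (\<alpha> * f1 p + (1 - \<alpha>) * f2 p) / p) at_top (at_right 0))
         \<and> ((bigOmega_at0 (deriv f1) (\<lambda>p. f1 p / p) \<and> bigOmega_at0 (deriv f2) (\<lambda>p. f2 p / p))
              \<longrightarrow> bigOmega_at0 (deriv (\<lambda>p. \<alpha> * f1 p + (1 - \<alpha>) * f2 p)) (\<lambda>p. (\<alpha> * f1 p + (1 - \<alpha>) * f2 p) / p))"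
proof (intro conjI impI)
  have c1: "\<And>k. 0 \<le> c1 k" and c2: "\<And>k. 0 \<le> c2 k" using s1 s2 by (auto simp: series_form_def)
  have c0: "c1 0 = 0" "c2 0 = 0" using s1 s2 by (auto simp: series_form_def)
  have "series_form (\<lambda>p. \<alpha> * f1 p + (1 - \<alpha>) * f2 p) (\<lambda>k. \<alpha> * c1 k + (1 - \<alpha>) * c2 k)"
  proof (rule sf_intro[where S="\<lambda>q. \<alpha> * G c1 q + (1 - \<alpha>) * G c2 q"])
    show "\<And>k. 0 \<le> \<alpha> * c1 k + (1 - \<alpha>) * c2 k" using c1 c2 al by (simp add: add_nonneg_nonneg)
    show "\<alpha> * c1 0 + (1 - \<alpha>) * c2 0 = 0" by (simp add: c0)
    fix q :: real assume q: "0 \<le> q" "q \<le> 1"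
    have "(\<lambda>k. \<alpha> * (c1 k * q^k) + (1 - \<alpha>) * (c2 k * q^k)) sums (\<alpha> * G c1 q + (1 - \<alpha>) * G c2 q)"
      by (intro sums_add sums_mult sf_summable[OF s1 q] sf_summable[OF s2 q])
    thus "(\<lambda>k. (\<alpha> * c1 k + (1 - \<alpha>) * c2 k) * q ^ k) sums (\<alpha> * G c1 q + (1 - \<alpha>) * G c2 q)"
      by (simp add: algebra_simps)
  next
    show "\<alpha> * G c1 1 + (1 - \<alpha>) * G c2 1 = 1" by (simp add: sf_G1[OF s1] sf_G1[OF s2])
    fix p :: real assume p: "p \<in> {0<..<1}"
    show "\<alpha> * f1 p + (1 - \<alpha>) * f2 p = 1 - (\<alpha> * G c1 (1 - p) + (1 - \<alpha>) * G c2 (1 - p))"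
      unfolding sf_F[OF s1 p] sf_F[OF s2 p] by (simp add: algebra_simps)
  qed
  thus "\<exists>c. series_form (\<lambda>p. \<alpha> * f1 p + (1 - \<alpha>) * f2 p) c" by blast
next
  assume H: "filterlim (\<lambda>p. f1 p / p) at_top (at_right 0) \<and> filterlim (\<lambda>p. f2 p / p) at_top (at_right 0)"
  have "filterlim (\<lambda>p. \<alpha> * (f1 p / p)) at_top (at_right 0)"
    by (rule filterlim_tendsto_pos_mult_at_top[OF tendsto_const al(1) conjunct1[OF H]])
  moreover have "eventually (\<lambda>p. \<alpha> * (f1 p / p) \<le> (\<alpha> * f1 p + (1 - \<alpha>) * f2 p) / p) (at_right 0)"
    using ev01
  proof eventually_elim
    fix p :: real assume p: "0 < p \<and> p < 1"
    hence "f2 p \<in> {0<..<1}" using r2 by auto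
    hence "\<alpha> * f1 p \<le> \<alpha> * f1 p + (1 - \<alpha>) * f2 p" using al by simp
    thus "\<alpha> * (f1 p / p) \<le> (\<alpha> * f1 p + (1 - \<alpha>) * f2 p) / p" using p by (simp add: divide_right_mono)
  qed
  ultimately show "filterlim (\<lambda>p. (\<alpha> * f1 p + (1 - \<alpha>) * f2 p) / p) at_top (at_right 0)"
    by (rule filterlim_at_top_mono)
next
  assume H: "bigOmega_at0 (deriv f1) (\<lambda>p. f1 p / p) \<and> bigOmega_at0 (deriv f2) (\<lambda>p. f2 p / p)"
  obtain C1 where C1: "C1 > 0" and e1: "eventually (\<lambda>p. C1 * (f1 p / p) \<le> deriv f1 p) (at_right 0)"
    using H unfolding bigO_iff by blast
  obtain C2 where C2: "C2 > 0" and e2: "eventually (\<lambda>p. C2 * (f2 p / p) \<le> deriv f2 p) (at_right 0)"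
    using H unfolding bigO_iff by blast
  define C where "C = min C1 C2"
  have CC: "C > 0" "C \<le> C1" "C \<le> C2" using C1 C2 by (auto simp: C_def)
  have "eventually (\<lambda>p. C * ((\<alpha> * f1 p + (1 - \<alpha>) * f2 p) / p) \<le> deriv (\<lambda>p. \<alpha> * f1 p + (1 - \<alpha>) * f2 p) p) (at_right 0)"
    using ev01 e1 e2
  proof eventually_elim
    fix p :: real assume p: "0 < p \<and> p < 1" and i1: "C1 * (f1 p / p) \<le> deriv f1 p"
      and i2: "C2 * (f2 p / p) \<le> deriv f2 p"
    have a: "f1 p \<in> {0<..<1}" "f2 p \<in> {0<..<1}" using r1 r2 p by auto
    have d1: "(f1 has_field_derivative deriv f1 p) (at p)" using p by (intro sf_DERIV[OF s1]) auto
    have d2: "(f2 has_field_derivative deriv f2 p) (at p)" using p by (intro sf_DERIV[OF s2]) auto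
    have "((\<lambda>p. \<alpha> * f1 p + (1 - \<alpha>) * f2 p) has_field_derivative \<alpha> * deriv f1 p + (1 - \<alpha>) * deriv f2 p) (at p)"
      by (rule DERIV_add[OF DERIV_cmult[OF d1] DERIV_cmult[OF d2]])
    hence dd: "deriv (\<lambda>p. \<alpha> * f1 p + (1 - \<alpha>) * f2 p) p = \<alpha> * deriv f1 p + (1 - \<alpha>) * deriv f2 p"
      by (rule DERIV_imp_deriv)
    define x where "x = f1 p / p"
    define y where "y = f2 p / p"
    have x0: "x \<ge> 0" "y \<ge> 0" using a p by (auto simp: x_def y_def)
    have m1: "C * x \<le> deriv f1 p" using i1 CC x0 unfolding x_def[symmetric]
      by (meson mult_right_mono order_trans)
    have m2: "C * y \<le> deriv f2 p" using i2 CC x0 unfolding y_def[symmetric]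
      by (meson mult_right_mono order_trans)
    have m3: "\<alpha> * (C * x) \<le> \<alpha> * deriv f1 p" using m1 al by simp
    have m4: "(1 - \<alpha>) * (C * y) \<le> (1 - \<alpha>) * deriv f2 p" using m2 al by simp
    have eq: "C * ((\<alpha> * f1 p + (1 - \<alpha>) * f2 p) / p) = \<alpha> * (C * x) + (1 - \<alpha>) * (C * y)"
      using p by (simp add: x_def y_def field_simps)
    show "C * ((\<alpha> * f1 p + (1 - \<alpha>) * f2 p) / p) \<le> deriv (\<lambda>p. \<alpha> * f1 p + (1 - \<alpha>) * f2 p) p"
      unfolding dd eq using m3 m4 by linarith
  qed
  thus "bigOmega_at0 (deriv (\<lambda>p. \<alpha> * f1 p + (1 - \<alpha>) * f2 p)) (\<lambda>p. (\<alpha> * f1 p + (1 - \<alpha>) * f2 p) / p)"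
    unfolding bigO_iff using CC by blast
qed

theorem proposition4:
  fixes f1 f2 :: "real \<Rightarrow> real" and c1 c2 :: "nat \<Rightarrow> real" and \<alpha> :: real
  assumes f1_range: "\<forall>p\<in>{0<..<1}. f1 p \<in> {0<..<1}"
    and f2_range: "\<forall>p\<in>{0<..<1}. f2 p \<in> {0<..<1}"
    and f1_form: "series_form f1 c1"
    and f2_form: "series_form f2 c2"
    and alpha: "0 < \<alpha>" "\<alpha> < 1"
  shows "\<forall>F \<in> {(\<lambda>p. f2 (f1 p)), (\<lambda>p. 1 - (1 - f1 p) * (1 - f2 p)), (\<lambda>p. \<alpha> * f1 p + (1 - \<alpha>) * f2 p)}.
           (\<exists>c. series_form F c)
         \<and> ((filterlim (\<lambda>p. f1 p / p) at_top (at_right 0) \<and> filterlim (\<lambda>p. f2 p / p) at_top (at_right 0))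
              \<longrightarrow> filterlim (\<lambda>p. F p / p) at_top (at_right 0))
         \<and> ((bigOmega_at0 (deriv f1) (\<lambda>p. f1 p / p) \<and> bigOmega_at0 (deriv f2) (\<lambda>p. f2 p / p))
              \<longrightarrow> bigOmega_at0 (deriv F) (\<lambda>p. F p / p))"
proof -
  have A: "\<forall>p\<in>{0<..<1}. f1 p \<in> {0<..<1}" "\<forall>p\<in>{0<..<1}. f2 p \<in> {0<..<1}" using f1_range f2_range by auto
  show ?thesis
    using case_comp[OF A f1_form f2_form] case_prod[OF A f1_form f2_form] case_mix[OF A f1_form f2_form alpha]
    by (simp only: ball_simps insert_iff empty_iff) auto
qed

end
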